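(* Let $R$ be a commutative elementary divisor domain, let $E,\Phi$ be $n\times n$ $d$-matrices, and let $A=P_A^{-1}EQ_A^{-1}$ and $B=P_B^{-1}\Phi Q_B^{-1}$ with $P_A,Q_A,P_B,Q_B\in GL_n(R)$. Then $B$ is a left divisor of $A$ (i.e. $A=BC$ for some $C\in M_n(R)$) if and only if $P_B=LP_A$ for some $L\in\mathbf L(E,\Phi)$.
   Context: Elementary divisor domain: commutative integral domain over which every matrix is equivalent to a $d$-matrix, i.e. a diagonal matrix $\mathrm{diag}(\varphi_1,\dots)$ with $\varphi_i\mid\varphi_{i+1}$. For $n\times n$ $d$-matrices $E,\Phi$: $\mathbf L(E,\Phi)=\{L\in GL_n(R):\ \exists S\in M_n(R),\ LE=\Phi S\}$. *)

theory Defs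
  imports "Jordan_Normal_Form.Matrix"
begin

definition d_matrix :: "'a::comm_ring_1 mat \<Rightarrow> bool" where
  "d_matrix D \<longleftrightarrow>
     (\<forall>i j. i < dim_row D \<longrightarrow> j < dim_col D \<longrightarrow> i \<noteq> j \<longrightarrow> D $$ (i, j) = 0) \<and>
     (\<forall>i. Suc i < min (dim_row D) (dim_col D) \<longrightarrow> D $$ (i, i) dvd D $$ (Suc i, Suc i))"

definition elementary_divisor_domain :: "'a::idom itself \<Rightarrow> bool" where
  "elementary_divisor_domain TYPE('a) \<longleftrightarrow>
     (\<forall>m k (A :: 'a mat). A \<in> carrier_mat m k \<longrightarrow>
        (\<exists>P Q. P \<in> carrier_mat m m \<and> Q \<in> carrier_mat k k \<and>
               invertible_mat P \<and> invertible_mat Q \<and> d_matrix (P * A * Q)))"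

definition L_set :: "nat \<Rightarrow> 'a::comm_ring_1 mat \<Rightarrow> 'a mat \<Rightarrow> 'a mat set" where
  "L_set n E \<Phi> = {L. L \<in> carrier_mat n n \<and> invertible_mat L \<and>
       (\<exists>S \<in> carrier_mat n n. L * E = \<Phi> * S)}"

end

theory Submission imports Defs begin
lemma inv_obtain:
  fixes M :: "'a::comm_ring_1 mat"
  assumes M: "M \<in> carrier_mat n n" and i: "invertible_mat M"
  shows "\<exists>N \<in> carrier_mat n n. M * N = 1\<^sub>m n \<and> N * M = 1\<^sub>m n"
proof -
  obtain N where h0: "M * N = 1\<^sub>m (dim_row M)" "N * M = 1\<^sub>m (dim_row N)"
    using i unfolding invertible_mat_def inverts_mat_def by blast
  have dr: "dim_row M = n" using M by simp
  have "dim_col (N * M) = n" using M by simp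
  hence r: "dim_row N = n" unfolding h0(2) by simp
  have h1: "M * N = 1\<^sub>m n" using h0(1) dr by simp
  have h2: "N * M = 1\<^sub>m n" using h0(2) r by simp
  have "dim_col (M * N) = n" unfolding h1 by simp
  hence "dim_col N = n" by simp
  hence "N \<in> carrier_mat n n" using r by (intro carrier_matI)
  thus ?thesis using h1 h2 by blast
qed
lemma inv_cancel:
  fixes M N X :: "'a::comm_ring_1 mat"
  assumes "M \<in> carrier_mat n n" "N \<in> carrier_mat n n" "M * N = 1\<^sub>m n" "dim_row X = n"
  shows "M * (N * X) = X"
proof -
  have X: "X \<in> carrier_mat n (dim_col X)" using assms(4) by (intro carrier_matI) auto
  have "M * (N * X) = M * N * X" using assoc_mult_mat[OF assms(1,2) X] by simp
  also have "\<dots> = X" using assms(3) X by simp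
  finally show ?thesis .
qed
lemma invertible_prod:
  fixes M N :: "'a::comm_ring_1 mat"
  assumes M: "M \<in> carrier_mat n n" "invertible_mat M"
    and N: "N \<in> carrier_mat n n" "invertible_mat N"
  shows "invertible_mat (M * N)"
proof -
  obtain Mi where Mi: "Mi \<in> carrier_mat n n" "M * Mi = 1\<^sub>m n" "Mi * M = 1\<^sub>m n"
    using inv_obtain[OF M] by auto
  obtain Ni where Ni: "Ni \<in> carrier_mat n n" "N * Ni = 1\<^sub>m n" "Ni * N = 1\<^sub>m n"
    using inv_obtain[OF N] by auto
  have 1: "M * N * (Ni * Mi) = 1\<^sub>m n"
  proof -
    have "M * N * (Ni * Mi) = M * (N * (Ni * Mi))"
      using assoc_mult_mat[OF M(1) N(1) mult_carrier_mat[OF Ni(1) Mi(1)]] .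
    also have "N * (Ni * Mi) = Mi" using inv_cancel[OF N(1) Ni(1) Ni(2)] Mi(1) by simp
    finally show ?thesis using Mi(2) by simp
  qed
  have 2: "Ni * Mi * (M * N) = 1\<^sub>m n"
  proof -
    have "Ni * Mi * (M * N) = Ni * (Mi * (M * N))"
      using assoc_mult_mat[OF Ni(1) Mi(1) mult_carrier_mat[OF M(1) N(1)]] .
    also have "Mi * (M * N) = N" using inv_cancel[OF Mi(1) M(1) Mi(3)] N(1) by simp
    finally show ?thesis using Ni(3) by simp
  qed
  have sq: "square_mat (M * N)" using M N by simp
  show ?thesis unfolding invertible_mat_def inverts_mat_def
    using 1 2 sq M(1) Ni(1) by (intro conjI exI[of _ "Ni * Mi"]) simp_all
qed
theorem theorem4p2:
  fixes E \<Phi> A B P\<^sub>A Q\<^sub>A P\<^sub>B Q\<^sub>B :: "'a::idom mat"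
  assumes edd: "elementary_divisor_domain TYPE('a)"
    and E: "E \<in> carrier_mat n n" "d_matrix E"
    and Phi: "\<Phi> \<in> carrier_mat n n" "d_matrix \<Phi>"
    and PQ: "P\<^sub>A \<in> carrier_mat n n" "Q\<^sub>A \<in> carrier_mat n n"
            "P\<^sub>B \<in> carrier_mat n n" "Q\<^sub>B \<in> carrier_mat n n"
    and inv: "invertible_mat P\<^sub>A" "invertible_mat Q\<^sub>A"
             "invertible_mat P\<^sub>B" "invertible_mat Q\<^sub>B"
    and AB: "A \<in> carrier_mat n n" "B \<in> carrier_mat n n"
    and A_def: "P\<^sub>A * A * Q\<^sub>A = E"
    and B_def: "P\<^sub>B * B * Q\<^sub>B = \<Phi>"
  shows "(\<exists>C \<in> carrier_mat n n. A = B * C) \<longleftrightarrow> (\<exists>L \<in> L_set n E \<Phi>. P\<^sub>B = L * P\<^sub>A)"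
proof -
  obtain PAi where PAi: "PAi \<in> carrier_mat n n" "P\<^sub>A * PAi = 1\<^sub>m n" "PAi * P\<^sub>A = 1\<^sub>m n"
    using inv_obtain[OF PQ(1) inv(1)] by auto
  obtain QAi where QAi: "QAi \<in> carrier_mat n n" "Q\<^sub>A * QAi = 1\<^sub>m n" "QAi * Q\<^sub>A = 1\<^sub>m n"
    using inv_obtain[OF PQ(2) inv(2)] by auto
  obtain PBi where PBi: "PBi \<in> carrier_mat n n" "P\<^sub>B * PBi = 1\<^sub>m n" "PBi * P\<^sub>B = 1\<^sub>m n"
    using inv_obtain[OF PQ(3) inv(3)] by auto
  obtain QBi where QBi: "QBi \<in> carrier_mat n n" "Q\<^sub>B * QBi = 1\<^sub>m n" "QBi * Q\<^sub>B = 1\<^sub>m n"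
    using inv_obtain[OF PQ(4) inv(4)] by auto
  note c = PQ AB PAi(1) QAi(1) PBi(1) QBi(1) E(1) Phi(1)
  note as = assoc_mult_mat[of _ n n _ n _ n]
  note canc = inv_cancel[OF PQ(1) PAi(1) PAi(2)] inv_cancel[OF PAi(1) PQ(1) PAi(3)]
    inv_cancel[OF PQ(2) QAi(1) QAi(2)] inv_cancel[OF QAi(1) PQ(2) QAi(3)]
    inv_cancel[OF PQ(3) PBi(1) PBi(2)] inv_cancel[OF PBi(1) PQ(3) PBi(3)]
    inv_cancel[OF PQ(4) QBi(1) QBi(2)] inv_cancel[OF QBi(1) PQ(4) QBi(3)]
  have PAinv: "invertible_mat PAi" unfolding invertible_mat_def inverts_mat_def
    using PAi c by (auto intro!: exI[of _ P\<^sub>A])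
  show ?thesis
  proof
    assume "\<exists>C \<in> carrier_mat n n. A = B * C"
    then obtain C where C: "C \<in> carrier_mat n n" "A = B * C" by auto
    define L where "L = P\<^sub>B * PAi"
    define S where "S = QBi * C * Q\<^sub>A"
    have Lc: "L \<in> carrier_mat n n" using c by (simp add: L_def)
    have Li: "invertible_mat L" unfolding L_def
      using invertible_prod[OF PQ(3) inv(3) PAi(1) PAinv] .
    have "L * E = \<Phi> * S"
      unfolding L_def S_def A_def[symmetric] B_def[symmetric] C(2)
      using c C by (simp add: as canc PAi(2,3) QAi(2,3) PBi(2,3) QBi(2,3))
    moreover have "S \<in> carrier_mat n n" using c C by (simp add: S_def)
    moreover have "P\<^sub>B = L * P\<^sub>A"
      unfolding L_def using c by (simp add: as canc PAi(2,3) QAi(2,3) PBi(2,3) QBi(2,3))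
    ultimately show "\<exists>L \<in> L_set n E \<Phi>. P\<^sub>B = L * P\<^sub>A"
      using Lc Li unfolding L_set_def by blast
  next
    assume "\<exists>L \<in> L_set n E \<Phi>. P\<^sub>B = L * P\<^sub>A"
    then obtain L S where L: "L \<in> carrier_mat n n" "S \<in> carrier_mat n n"
      "L * E = \<Phi> * S" "P\<^sub>B = L * P\<^sub>A"
      unfolding L_set_def by auto
    define C where "C = Q\<^sub>B * S * QAi"
    have Cc: "C \<in> carrier_mat n n" using c L by (simp add: C_def)
    have Aeq: "A = PAi * E * QAi"
      unfolding A_def[symmetric] using c by (simp add: as canc PAi(2,3) QAi(2,3) PBi(2,3) QBi(2,3))
    have Beq: "B = PBi * \<Phi> * QBi"
      unfolding B_def[symmetric] using c by (simp add: as canc PAi(2,3) QAi(2,3) PBi(2,3) QBi(2,3))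
    have LE: "\<Phi> * (S * QAi) = L * (E * QAi)"
    proof -
      have "\<Phi> * (S * QAi) = \<Phi> * S * QAi"
        using c L(2) by (rule_tac assoc_mult_mat[symmetric]) auto
      also have "\<dots> = L * E * QAi" using L(3) by simp
      also have "\<dots> = L * (E * QAi)"
        using c L(1) by (rule_tac assoc_mult_mat) auto
      finally show ?thesis .
    qed
    note cc = c L(1,2)
    have "B * C = PBi * (L * (E * QAi))"
      unfolding Beq C_def using cc by (simp add: as canc LE)
    also have "\<dots> = PBi * (L * (P\<^sub>A * (PAi * (E * QAi))))"
      using c by (simp add: canc)
    also have "\<dots> = PBi * (P\<^sub>B * (PAi * (E * QAi)))"
      using cc by (simp add: as L(4))
    also have "\<dots> = A"
      using c by (simp add: Aeq as canc)
    finally show "\<exists>C \<in> carrier_mat n n. A = B * C" using Cc by auto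
  qed
qed

end
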